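(* Let $(X,\rho,\mu)$ be a $K$-doubling metric measure space, let $x\in X$ with $\mu(\{x\})=0$, let $B$ be a $\mu$-neighborhood of $x$ and let $f\colon B\to[0,+\infty)$ be a Lipschitz function with $f(x)=0$. Then $$\limsup_{y\in B,\ y\to x}\frac{f(y)}{\rho(y,x)}=\mu\text{-}\limsup_{y\in B,\ y\to x}\frac{f(y)}{\rho(y,x)}.$$
   Context: A $K$-doubling metric measure space ($K>0$) is a triple $(X,\rho,\mu)$ where $(X,\rho)$ is a complete separable metric space and $\mu$ is a Borel-regular outer measure on $X$ with $0<\mu(B_{2r}(x))\le K\mu(B_r(x))<+\infty$ for all $x\in X$, $r>0$. A set $E\ni x$ is a $\mu$-neighborhood of $x$ if there is a Borel set $B\subseteq E$ with $\lim_{r\to0^+}\mu(B_r(x)\setminus B)/\mu(B_r(x))=0$. For a real function $g$ on $A\subseteq X$ and a point $x$ such that $A\cap U\setminus\{x\}\neq\emptyset$ for every $\mu$-neighborhood $U$ of $x$, one sets $\mu\text{-}\limsup_{y\in A,\,y\to x}g(y)=\inf_U\sup_{y\in U\cap A\setminus\{x\}}g(y)$, the infimum over all $\mu$-neighborhoods $U$ of $x$. *)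

theory Defs
  imports "HOL-Analysis.Analysis"
begin

definition outer_measure :: "('a set \<Rightarrow> ennreal) \<Rightarrow> bool" where
  "outer_measure \<mu> \<longleftrightarrow> \<mu> {} = 0 \<and> (\<forall>A B. A \<subseteq> B \<longrightarrow> \<mu> A \<le> \<mu> B) \<and>
     (\<forall>A :: nat \<Rightarrow> 'a set. \<mu> (\<Union>i. A i) \<le> (\<Sum>i. \<mu> (A i)))"

definition caratheodory_measurable :: "('a set \<Rightarrow> ennreal) \<Rightarrow> 'a set \<Rightarrow> bool" where
  "caratheodory_measurable \<mu> E \<longleftrightarrow> (\<forall>A. \<mu> A = \<mu> (A \<inter> E) + \<mu> (A - E))"

definition borel_regular_outer_measure :: "('a::topological_space set \<Rightarrow> ennreal) \<Rightarrow> bool" where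
  "borel_regular_outer_measure \<mu> \<longleftrightarrow> outer_measure \<mu> \<and>
     (\<forall>E \<in> sets borel. caratheodory_measurable \<mu> E) \<and>
     (\<forall>A. \<exists>B \<in> sets borel. A \<subseteq> B \<and> \<mu> B = \<mu> A)"

text \<open>K-doubling metric measure space: the metric space is the type 'a,
  complete and separable (polish_space).\<close>
definition doubling_mms :: "real \<Rightarrow> ('a::polish_space set \<Rightarrow> ennreal) \<Rightarrow> bool" where
  "doubling_mms K \<mu> \<longleftrightarrow> K > 0 \<and> borel_regular_outer_measure \<mu> \<and>
     (\<forall>x r. r > 0 \<longrightarrow> 0 < \<mu> (ball x (2 * r)) \<and> \<mu> (ball x (2 * r)) \<le> ennreal K * \<mu> (ball x r)
                      \<and> \<mu> (ball x r) < top)"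

definition mu_nbhd :: "('a::metric_space set \<Rightarrow> ennreal) \<Rightarrow> 'a \<Rightarrow> 'a set \<Rightarrow> bool" where
  "mu_nbhd \<mu> x E \<longleftrightarrow> x \<in> E \<and> (\<exists>B \<in> sets borel. B \<subseteq> E \<and>
     ((\<lambda>r. enn2real (\<mu> (ball x r - B) / \<mu> (ball x r))) \<longlongrightarrow> 0) (at_right 0))"

definition mu_limsup :: "('a::metric_space set \<Rightarrow> ennreal) \<Rightarrow> 'a \<Rightarrow> 'a set \<Rightarrow> ('a \<Rightarrow> real) \<Rightarrow> ereal" where
  "mu_limsup \<mu> x A g = (INF U \<in> {U. mu_nbhd \<mu> x U}. SUP y \<in> U \<inter> A - {x}. ereal (g y))"

end

theory Submission
  imports Defs
begin

lemma om_sub2: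
  assumes "outer_measure \<mu>"
  shows "\<mu> (S \<union> T) \<le> \<mu> S + \<mu> T"
proof -
  define A where "A = (\<lambda>i::nat. if i = 0 then S else if i = 1 then T else {})"
  have u: "(\<Union>i. A i) = S \<union> T"
  proof
    show "(\<Union>i. A i) \<subseteq> S \<union> T" unfolding A_def by auto
    have "A 0 = S" "A 1 = T" unfolding A_def by auto
    then show "S \<union> T \<subseteq> (\<Union>i. A i)" by (metis UNIV_I UN_upper Un_least)
  qed
  have e: "\<mu> {} = 0" using assms unfolding outer_measure_def by auto
  have "(\<Sum>i. \<mu> (A i)) = (\<Sum>i\<in>{0,1}. \<mu> (A i))"
    by (rule suminf_finite) (auto simp: A_def e)
  also have "\<dots> = \<mu> S + \<mu> T" by (simp add: A_def)
  finally show ?thesis using assms u unfolding outer_measure_def by metis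
qed

lemma om_mono:
  assumes "outer_measure \<mu>" "A \<subseteq> B"
  shows "\<mu> A \<le> \<mu> B"
  using assms unfolding outer_measure_def by auto

lemma dbl_iter:
  assumes "doubling_mms K \<mu>" "\<rho> > 0"
  shows "\<mu> (ball z (2^k * \<rho>)) \<le> ennreal K ^ k * \<mu> (ball z \<rho>)"
proof (induction k)
  case 0
  then show ?case by simp
next
  case (Suc k)
  have "\<mu> (ball z (2^Suc k * \<rho>)) = \<mu> (ball z (2 * (2^k * \<rho>)))" by (simp add: mult.assoc)
  also have "\<dots> \<le> ennreal K * \<mu> (ball z (2^k * \<rho>))"
    using assms unfolding doubling_mms_def by (auto)
  also have "\<dots> \<le> ennreal K * (ennreal K ^ k * \<mu> (ball z \<rho>))"
    by (rule mult_left_mono[OF Suc]) simp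
  finally show ?case by (simp add: mult.assoc)
qed

lemma density_small:
  assumes dm: "doubling_mms K \<mu>" and lim: "((\<lambda>r. enn2real (\<mu> (ball x r - C) / \<mu> (ball x r))) \<longlongrightarrow> 0) (at_right 0)"
    and e: "e > 0"
  shows "\<exists>\<rho>0>0. \<forall>\<rho>. 0 < \<rho> \<and> \<rho> < \<rho>0 \<longrightarrow> \<mu> (ball x \<rho> - C) < ennreal e * \<mu> (ball x \<rho>)"
proof -
  have om: "outer_measure \<mu>" using dm unfolding doubling_mms_def borel_regular_outer_measure_def by auto
  have "eventually (\<lambda>r. enn2real (\<mu> (ball x r - C) / \<mu> (ball x r)) < e) (at_right 0)"
    using order_tendstoD(2)[OF lim e] .
  then obtain b where b: "b > 0" "\<And>r. r > 0 \<Longrightarrow> r < b \<Longrightarrow> enn2real (\<mu> (ball x r - C) / \<mu> (ball x r)) < e"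
    unfolding eventually_at_right_field by auto
  show ?thesis
  proof (intro exI[of _ b] conjI allI impI)
    show "0 < b" by (rule b(1))
  next
    fix \<rho> assume r: "0 < \<rho> \<and> \<rho> < b"
    define a where "a = \<mu> (ball x \<rho> - C)"
    define m where "m = \<mu> (ball x \<rho>)"
    have m0: "m > 0" and mt: "m < top"
    proof -
      have D: "\<forall>x r. r > 0 \<longrightarrow> 0 < \<mu> (ball x (2 * r)) \<and> \<mu> (ball x r) < top" using dm unfolding doubling_mms_def by auto
      have "0 < \<mu> (ball x (2 * (\<rho>/2)))" "\<mu> (ball x \<rho>) < top" using D[rule_format, of "\<rho>/2" x] D[rule_format, of \<rho> x] r by auto
      then show "m > 0" "m < top" by (auto simp: m_def)
    qed
    have am: "a \<le> m" unfolding a_def m_def by (rule om_mono[OF om]) auto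
    have qt: "a / m \<noteq> top" using am mt m0 by (auto simp: ennreal_divide_eq_top_iff)
    have "a / m = ennreal (enn2real (a / m))" using qt by (simp add: less_top)
    also have "\<dots> < ennreal e" using b(2)[of \<rho>] r e unfolding a_def m_def
      by (subst ennreal_less_iff) auto
    finally have q: "a / m < ennreal e" .
    have "a = (a / m) * m" using m0 mt
      by (simp add: ennreal_divide_times ennreal_mult_divide_eq mult.commute[of a] ennreal_times_divide)
    also have "\<dots> < ennreal e * m" by (rule ennreal_mult_strict_right_mono[OF q m0 mt])
    finally show "\<mu> (ball x \<rho> - C) < ennreal e * \<mu> (ball x \<rho>)" by (simp add: a_def m_def)
  qed
qed

lemma ball_nbhd:
  assumes "d > 0" and "\<mu> {} = 0"
  shows "mu_nbhd \<mu> x (ball x d)"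
  unfolding mu_nbhd_def
proof (intro conjI bexI[of _ "ball x d"])
  show "x \<in> ball x d" using assms by simp
  show "ball x d \<in> sets borel" by simp
  show "ball x d \<subseteq> ball x d" by simp
  have "eventually (\<lambda>r. enn2real (\<mu> (ball x r - ball x d) / \<mu> (ball x r)) = 0) (at_right 0)"
    unfolding eventually_at_right_field
  proof (intro exI[of _ d] conjI allI impI)
    fix r :: real assume "0 < r" "r < d"
    then have "ball x r - ball x d = {}" by auto
    then have "\<mu> (ball x r - ball x d) = 0" by (subst \<open>ball x r - ball x d = {}\<close>) (rule assms(2))
    then show "enn2real (\<mu> (ball x r - ball x d) / \<mu> (ball x r)) = 0" by simp
  qed (use assms in auto)
  then show "((\<lambda>r. enn2real (\<mu> (ball x r - ball x d) / \<mu> (ball x r))) \<longlongrightarrow> 0) (at_right 0)"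
    by (rule tendsto_eventually)
qed

theorem proposition2p4:
  fixes K :: real and \<mu> :: "'a::polish_space set \<Rightarrow> ennreal"
    and x :: 'a and B :: "'a set" and f :: "'a \<Rightarrow> real"
  assumes "doubling_mms K \<mu>"
    and "\<mu> {x} = 0"
    and "mu_nbhd \<mu> x B"
    and "\<forall>y\<in>B. f y \<ge> 0"
    and "\<exists>L. L-lipschitz_on B f"
    and "f x = 0"
  shows "Limsup (at x within B) (\<lambda>y. ereal (f y / dist y x))
         = mu_limsup \<mu> x B (\<lambda>y. f y / dist y x)"
proof -
  define g where "g = (\<lambda>y. f y / dist y x)"
  have dm: "doubling_mms K \<mu>" by fact
  have om: "outer_measure \<mu>" using dm unfolding doubling_mms_def borel_regular_outer_measure_def by auto
  have e0: "\<mu> {} = 0" using om unfolding outer_measure_def by auto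
  have K0: "K > 0" using dm unfolding doubling_mms_def by auto
  have D: "\<forall>x r. r > 0 \<longrightarrow> 0 < \<mu> (ball x (2 * r)) \<and> \<mu> (ball x r) < top" using dm unfolding doubling_mms_def by auto
  have ballpos: "0 < \<mu> (ball z r)" if "r > 0" for z r
    using D[rule_format, of "r/2" z] that by auto
  have balltop: "\<mu> (ball z r) < top" if "r > 0" for z r
    using D[rule_format, of r z] that by auto
  obtain L where L: "L-lipschitz_on B f" using assms(5) by auto
  have L0: "L \<ge> 0" and Ld: "\<And>u v. u \<in> B \<Longrightarrow> v \<in> B \<Longrightarrow> dist (f u) (f v) \<le> L * dist u v"
    using L unfolding lipschitz_on_def by auto
  have dir1: "mu_limsup \<mu> x B g \<le> Limsup (at x within B) (\<lambda>y. ereal (g y))"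
    unfolding Limsup_def
  proof (rule INF_greatest)
    fix P assume "P \<in> {P. eventually P (at x within B)}"
    then obtain d where d: "d > 0" "\<forall>y\<in>B. y \<noteq> x \<and> dist y x < d \<longrightarrow> P y"
      by (auto simp: eventually_at)
    have "mu_limsup \<mu> x B g \<le> (SUP y \<in> ball x d \<inter> B - {x}. ereal (g y))"
      unfolding mu_limsup_def by (rule INF_lower) (simp add: ball_nbhd d e0)
    also have "\<dots> \<le> (SUP y\<in>{y. P y}. ereal (g y))"
      by (rule SUP_subset_mono) (use d in \<open>auto simp: dist_commute\<close>)
    finally show "mu_limsup \<mu> x B g \<le> (SUP y\<in>{y. P y}. ereal (g y))" .
  qed
  obtain CD where CD: "CD \<in> sets borel" "CD \<subseteq> B"
    "((\<lambda>r. enn2real (\<mu> (ball x r - CD) / \<mu> (ball x r))) \<longlongrightarrow> 0) (at_right 0)"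
    using assms(3) unfolding mu_nbhd_def by auto
  have dir2: "Limsup (at x within B) (\<lambda>y. ereal (g y)) \<le> mu_limsup \<mu> x B g"
    unfolding mu_limsup_def
  proof (rule INF_greatest)
    fix U assume "U \<in> {U. mu_nbhd \<mu> x U}"
    then obtain C where C: "C \<in> sets borel" "C \<subseteq> U"
      "((\<lambda>r. enn2real (\<mu> (ball x r - C) / \<mu> (ball x r))) \<longlongrightarrow> 0) (at_right 0)"
      unfolding mu_nbhd_def by auto
    show "Limsup (at x within B) (\<lambda>y. ereal (g y)) \<le> (SUP y \<in> U \<inter> B - {x}. ereal (g y))"
    proof (rule dense_le)
      fix t assume t: "t < Limsup (at x within B) (\<lambda>y. ereal (g y))"
      show "t \<le> (SUP y \<in> U \<inter> B - {x}. ereal (g y))"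
      proof (cases t)
        case MInf then show ?thesis by simp
      next
        case PInf with t show ?thesis by simp
      next
        case (real t')
        obtain s where s: "ereal t' < ereal s" "ereal s < Limsup (at x within B) (\<lambda>y. ereal (g y))"
          using ereal_dense2[of t] t real by auto
        have st: "t' < s" using s(1) by simp
        define \<delta> where "\<delta> = min (1/2) ((s - t') / (L + \<bar>t'\<bar> + 1))"
        have dpos: "\<delta> > 0" unfolding \<delta>_def using st L0 by auto
        have dhalf: "\<delta> \<le> 1/2" unfolding \<delta>_def by (rule min.cobounded1)
        have dbound: "\<delta> * (L + \<bar>t'\<bar> + 1) \<le> s - t'"
        proof -
          have "\<delta> \<le> (s - t') / (L + \<bar>t'\<bar> + 1)" unfolding \<delta>_def by auto
          then show ?thesis using L0 by (simp add: pos_le_divide_eq)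
        qed
        obtain k :: nat where k: "3 / \<delta> < 2 ^ k" using real_arch_pow[of 2 "3/\<delta>"] by auto
        have k': "3 < 2 ^ k * \<delta>" using k dpos by (simp add: pos_divide_less_eq)
        define M where "M = K ^ k"
        have M0: "M > 0" unfolding M_def using K0 by simp
        obtain \<rho>C where \<rho>C: "\<rho>C > 0" "\<And>\<rho>. 0 < \<rho> \<and> \<rho> < \<rho>C \<Longrightarrow> \<mu> (ball x \<rho> - C) < ennreal (1/(2*M)) * \<mu> (ball x \<rho>)"
          using density_small[OF dm C(3), of "1/(2*M)"] M0 by auto
        obtain \<rho>D where \<rho>D: "\<rho>D > 0" "\<And>\<rho>. 0 < \<rho> \<and> \<rho> < \<rho>D \<Longrightarrow> \<mu> (ball x \<rho> - CD) < ennreal (1/(2*M)) * \<mu> (ball x \<rho>)"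
          using density_small[OF dm CD(3), of "1/(2*M)"] M0 by auto
        define r0 where "r0 = min \<rho>C \<rho>D / 2"
        have r0: "r0 > 0" unfolding r0_def using \<rho>C \<rho>D by auto
        have "\<not> eventually (\<lambda>y. ereal (g y) \<le> ereal s) (at x within B)"
          using Limsup_bounded[of "\<lambda>y. ereal (g y)" "ereal s" "at x within B"] s(2) by auto
        then obtain y where y: "y \<in> B" "y \<noteq> x" "dist y x < r0" "\<not> g y \<le> s"
          unfolding eventually_at using r0 by auto
        define r where "r = dist y x"
        have rpos: "r > 0" using y unfolding r_def by simp
        have r2C: "2 * r < \<rho>C" and r2D: "2 * r < \<rho>D" using y(3) unfolding r_def r0_def by auto
        have sub1: "ball x (2 * r) \<subseteq> ball y (2 ^ k * (\<delta> * r))"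
        proof
          fix z assume "z \<in> ball x (2 * r)"
          then have "dist y z < 3 * r" using dist_triangle[of y z x] unfolding r_def
            by (auto simp: dist_commute)
          also have "3 * r < 2 ^ k * (\<delta> * r)" using k' rpos by (simp add: mult.assoc[symmetric])
          finally show "z \<in> ball y (2 ^ k * (\<delta> * r))" by simp
        qed
        have balls: "\<mu> (ball x (2 * r)) \<le> ennreal M * \<mu> (ball y (\<delta> * r))"
        proof -
          have "\<mu> (ball x (2 * r)) \<le> \<mu> (ball y (2 ^ k * (\<delta> * r)))" by (rule om_mono[OF om sub1])
          also have "\<dots> \<le> ennreal K ^ k * \<mu> (ball y (\<delta> * r))"
            by (rule dbl_iter[OF dm]) (use dpos rpos in simp)
          finally show ?thesis unfolding M_def using K0 by (simp add: ennreal_power)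
        qed
        have small: "\<mu> (ball x (2 * r) - (C \<inter> CD)) < ennreal (1/M) * \<mu> (ball x (2 * r))"
        proof -
          have "\<mu> (ball x (2 * r) - (C \<inter> CD)) = \<mu> ((ball x (2 * r) - C) \<union> (ball x (2 * r) - CD))"
            by (rule arg_cong[where f=\<mu>]) auto
          also have "\<dots> \<le> \<mu> (ball x (2 * r) - C) + \<mu> (ball x (2 * r) - CD)" by (rule om_sub2[OF om])
          also have "\<dots> < ennreal (1/(2*M)) * \<mu> (ball x (2 * r)) + ennreal (1/(2*M)) * \<mu> (ball x (2 * r))"
            by (rule add_strict_mono; rule \<rho>C(2) \<rho>D(2)) (use rpos r2C r2D in auto)
          also have "\<dots> = ennreal (1/M) * \<mu> (ball x (2 * r))"
            using M0 by (simp add: distrib_right[symmetric] ennreal_plus[symmetric] del: ennreal_plus)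
          finally show ?thesis .
        qed
        also have "\<dots> \<le> ennreal (1/M) * (ennreal M * \<mu> (ball y (\<delta> * r)))"
          by (rule mult_left_mono[OF balls]) simp
        also have "\<dots> = \<mu> (ball y (\<delta> * r))"
          using M0 by (simp add: mult.assoc[symmetric] ennreal_mult''[symmetric])
        finally have lt: "\<mu> (ball x (2 * r) - (C \<inter> CD)) < \<mu> (ball y (\<delta> * r))" .
        have "\<exists>z. z \<in> ball y (\<delta> * r) \<and> z \<in> C \<and> z \<in> CD"
        proof (rule ccontr)
          assume "\<not> ?thesis"
          then have "ball y (\<delta> * r) \<subseteq> ball x (2 * r) - (C \<inter> CD)"
          proof (auto)
            fix z assume "dist y z < \<delta> * r"
            moreover have "\<delta> * r \<le> r" using dhalf rpos by simp
            ultimately show "dist x z < 2 * r" using dist_triangle[of x z y] unfolding r_def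
              by (auto simp: dist_commute)
          qed
          then have "\<mu> (ball y (\<delta> * r)) \<le> \<mu> (ball x (2 * r) - (C \<inter> CD))" by (rule om_mono[OF om])
          then show False using lt by simp
        qed
        then obtain z where z: "dist y z < \<delta> * r" "z \<in> C" "z \<in> CD" by auto
        have zU: "z \<in> U" and zB: "z \<in> B" using z C(2) CD(2) by auto
        have dr: "\<delta> * r \<le> r / 2" using dhalf rpos by simp
        have dzx1: "dist z x \<ge> r - \<delta> * r" using dist_triangle[of y x z] z(1) unfolding r_def
          by (auto simp: dist_commute)
        have dzx2: "dist z x \<le> (1 + \<delta>) * r" using dist_triangle[of z x y] z(1) unfolding r_def
          by (auto simp: dist_commute algebra_simps)
        have dzpos: "dist z x > 0" using dzx1 dr rpos by linarith
        have zx: "z \<noteq> x" using dzpos by auto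
        have fy: "f y > s * r" using y(4) rpos unfolding g_def r_def by (simp add: not_le pos_less_divide_eq)
        have fz: "f z \<ge> f y - L * (\<delta> * r)"
        proof -
          have "f y - f z \<le> dist (f y) (f z)" by (simp add: dist_real_def)
          also have "\<dots> \<le> L * dist y z" by (rule Ld[OF y(1) zB])
          also have "\<dots> \<le> L * (\<delta> * r)" using z(1) L0 by (simp add: mult_left_mono)
          finally show ?thesis by simp
        qed
        have gz: "g z \<ge> t'"
        proof (cases "t' \<le> 0")
          case True
          have "f z \<ge> 0" using assms(4) zB by auto
          have "0 \<le> f z / dist z x" using \<open>f z \<ge> 0\<close> by simp
          then show ?thesis unfolding g_def using True by linarith
        next
          case False
          have "\<delta> * (L + t') \<le> s - t'" using dbound False dpos
            by (smt (verit, ccfv_SIG) mult_left_mono)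
          then have "t' * (1 + \<delta>) \<le> s - L * \<delta>" by (simp add: algebra_simps)
          then have "t' * ((1 + \<delta>) * r) \<le> (s - L * \<delta>) * r" using rpos
            by (simp add: mult.assoc[symmetric] mult_right_mono)
          moreover have "t' * dist z x \<le> t' * ((1 + \<delta>) * r)" using dzx2 False by simp
          moreover have "(s - L * \<delta>) * r < f z" using fy fz by (simp add: algebra_simps)
          ultimately have "t' * dist z x \<le> f z" by linarith
          then show ?thesis unfolding g_def using dzpos by (simp add: pos_le_divide_eq)
        qed
        have "z \<in> U \<inter> B - {x}" using zU zB zx by simp
        then have "ereal (g z) \<le> (SUP y \<in> U \<inter> B - {x}. ereal (g y))" by (rule SUP_upper)
        moreover have "ereal t' \<le> ereal (g z)" using gz by simp
        ultimately show ?thesis using real by (metis order_trans)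
      qed
    qed
  qed
  show ?thesis using dir1 dir2 unfolding g_def by simp
qed

end
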